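(* Let $\bm{X},\bm{Y}\in\mathbb{R}^{n\times r}$ be a critical point of $h(\bm{X},\bm{Y})=\frac12\sum_{(i,j)\in\Omega}[(\bm{X}\bm{Y}^\top)_{ij}-M_{ij}]^2+\frac{\lambda}{2}\|\bm{X}\|_{\mathrm{F}}^2+\frac{\lambda}{2}\|\bm{Y}\|_{\mathrm{F}}^2$ with $\mathrm{rank}(\bm{X})=\mathrm{rank}(\bm{Y})=r$. Let $T$ be the tangent space of $\bm{X}\bm{Y}^\top$ and suppose $\mathcal{P}_\Omega$ is injective on $T$, i.e. for $\bm{H}\in T$, $\mathcal{P}_\Omega(\bm{H})=\bm{0}$ implies $\bm{H}=\bm{0}$. Suppose furthermore that (a) $\|\mathcal{P}_\Omega(\bm{E})\|<\lambda/8$ and (b) $\|\mathcal{P}_\Omega(\bm{X}\bm{Y}^\top-\bm{M}^\star)-p(\bm{X}\bm{Y}^\top-\bm{M}^\star)\|<\lambda/8$. Then $\bm{Z}=\bm{X}\bm{Y}^\top$ is the unique minimizer of $g(\bm{Z})=\frac12\sum_{(i,j)\in\Omega}(Z_{ij}-M_{ij})^2+\lambda\|\bm{Z}\|_*$.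
   Context: $\bm{M}^\star\in\mathbb{R}^{n\times n}$ has rank $r$; $\bm{E}\in\mathbb{R}^{n\times n}$ is a noise matrix, $\bm{M}=\bm{M}^\star+\bm{E}$, $\Omega\subseteq[n]\times[n]$, $p\in(0,1]$, $\lambda>0$. $\mathcal{P}_\Omega(\bm{Z})$ keeps the entries of $\bm{Z}$ in $\Omega$ and zeros the others. For a rank-$r$ matrix with compact SVD $\bm{U}\bm{\Sigma}\bm{V}^\top$ ($\bm{U},\bm{V}\in\mathbb{R}^{n\times r}$), its tangent space is $T=\{\bm{U}\bm{A}^\top+\bm{B}\bm{V}^\top:\bm{A},\bm{B}\in\mathbb{R}^{n\times r}\}$. $\|\cdot\|$ is the spectral norm. The statement is deterministic. *)

theory Defs
  imports "HOL-Analysis.Analysis"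
begin

definition spec_norm :: "real^'m^'k \<Rightarrow> real" where
  "spec_norm A = onorm (\<lambda>x. A *v x)"

definition nuc_norm :: "real^'m^'k \<Rightarrow> real" where
  "nuc_norm A = Sup {trace (transpose A ** B) | B :: real^'m^'k. spec_norm B \<le> 1}"

definition frob_sq :: "real^'m^'k \<Rightarrow> real" where
  "frob_sq A = (\<Sum>i\<in>UNIV. \<Sum>j\<in>UNIV. (A $ i $ j)^2)"

definition P_Omega :: "('k \<times> 'm) set \<Rightarrow> real^'m^'k \<Rightarrow> real^'m^'k" where
  "P_Omega \<Omega> Z = (\<chi> i j. if (i, j) \<in> \<Omega> then Z $ i $ j else 0)"

text \<open>Tangent space of a rank-r matrix Z (r = CARD('r)), defined through a compact SVD
  Z = U \<Sigma> V^T with U, V having orthonormal columns and \<Sigma> diagonal with positive entries.\<close>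
definition tangent_space :: "'r::finite itself \<Rightarrow> real^'n^'n \<Rightarrow> (real^'n^'n) set" where
  "tangent_space _ Z = {H. \<exists>(U::real^'r^'n) (V::real^'r^'n) (\<Sigma>::real^'r::finite^'r) A B.
      transpose U ** U = mat 1 \<and> transpose V ** V = mat 1 \<and>
      (\<forall>i j. i \<noteq> j \<longrightarrow> \<Sigma> $ i $ j = 0) \<and> (\<forall>i. \<Sigma> $ i $ i > 0) \<and>
      Z = U ** \<Sigma> ** transpose V \<and>
      H = U ** transpose A + B ** transpose V}"

definition h_obj :: "('n \<times> 'n) set \<Rightarrow> real^'n^'n \<Rightarrow> real \<Rightarrow> (real^'r^'n) \<times> (real^'r^'n) \<Rightarrow> real" where
  "h_obj \<Omega> M lam XY = (let X = fst XY; Y = snd XY in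
     (1/2) * (\<Sum>(i,j)\<in>\<Omega>. ((X ** transpose Y) $ i $ j - M $ i $ j)^2)
     + (lam/2) * frob_sq X + (lam/2) * frob_sq Y)"

definition g_obj :: "('n \<times> 'n) set \<Rightarrow> real^'n^'n \<Rightarrow> real \<Rightarrow> real^'n^'n \<Rightarrow> real" where
  "g_obj \<Omega> M lam Z = (1/2) * (\<Sum>(i,j)\<in>\<Omega>. (Z $ i $ j - M $ i $ j)^2) + lam * nuc_norm Z"

end

theory Submission
  imports Defs
begin

lemma sym_inner:
  fixes A :: "real^'n^'n"
  assumes "transpose A = A"
  shows "(A *v x) \<bullet> y = x \<bullet> (A *v y)"
proof -
  have "(A *v x) \<bullet> y = (transpose A *v y) \<bullet> x"
    by (simp add: inner_vec_def matrix_vector_mult_def transpose_def sum_distrib_right sum_distrib_left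
        mult.commute mult.left_commute) (rule sum.swap)
  then show ?thesis using assms by (simp add: inner_commute)
qed

lemma quad_zero:
  fixes c d :: real
  assumes "\<And>t. c * t + d * t^2 \<le> 0"
  shows "c = 0"
proof -
  define e where "e = \<bar>d\<bar>+1"
  have e: "e > 0" "e + d \<ge> 1" unfolding e_def by auto
  have "c * (c / e) + d * (c / e)^2 \<le> 0" by (rule assms)
  moreover have "c * (c / e) + d * (c / e)^2 = (c^2 / e^2) * (e + d)"
    using e by (simp add: field_simps power2_eq_square)
  ultimately have "(c^2 / e^2) * (e + d) \<le> 0" by simp
  moreover have "c^2 / e^2 \<ge> 0" by simp
  ultimately have "c^2 / e^2 \<le> 0" using e
    by (smt (verit) mult_le_cancel_left1)
  then have "c^2 \<le> 0" using e by (simp add: divide_le_0_iff)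
  then show ?thesis by simp
qed

lemma exists_eigvec:
  fixes A :: "real^'n^'n"
  assumes sym: "transpose A = A" and S: "subspace S" and inv: "\<forall>x\<in>S. A *v x \<in> S"
    and ne: "S \<noteq> {0}"
  shows "\<exists>x\<in>S. norm x = 1 \<and> (\<exists>\<mu>. A *v x = \<mu> *\<^sub>R x)"
proof -
  define K where "K = S \<inter> sphere 0 1"
  have "compact K" unfolding K_def
    using S closed_subspace compact_sphere closed_Int_compact by blast
  obtain y where y: "y \<in> S" "y \<noteq> 0" using ne S subspace_0 by blast
  then have "y /\<^sub>R norm y \<in> K" unfolding K_def using S subspace_scale by auto
  then have "K \<noteq> {}" by auto
  have "continuous_on K (\<lambda>y. y \<bullet> (A *v y))"
    by (intro continuous_intros linear_continuous_on) auto
  then obtain x where x: "x \<in> K" and xmax: "\<forall>z\<in>K. z \<bullet> (A *v z) \<le> x \<bullet> (A *v x)"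
    using continuous_attains_sup[OF \<open>compact K\<close> \<open>K \<noteq> {}\<close>] by blast
  define \<mu> where "\<mu> = x \<bullet> (A *v x)"
  have xS: "x \<in> S" and nx: "norm x = 1" using x unfolding K_def by auto
  have bound: "z \<bullet> (A *v z) \<le> \<mu> * (z \<bullet> z)" if "z \<in> S" for z
  proof (cases "z = 0")
    case True then show ?thesis by simp
  next
    case False
    have "z /\<^sub>R norm z \<in> K" unfolding K_def using S subspace_scale that False by auto
    then have "(z /\<^sub>R norm z) \<bullet> (A *v (z /\<^sub>R norm z)) \<le> \<mu>" using xmax \<mu>_def by auto
    then have "(z \<bullet> (A *v z)) / (norm z)^2 \<le> \<mu>"
      by (simp add: matrix_vector_mult_scaleR power2_eq_square divide_inverse mult_ac)
    then show ?thesis using False by (simp add: divide_le_eq power2_norm_eq_inner)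
  qed
  have orth: "z \<bullet> (A *v x - \<mu> *\<^sub>R x) = 0" if "z \<in> S" for z
  proof -
    have "2 * (z \<bullet> (A *v x) - \<mu> * (z \<bullet> x)) * t + (z \<bullet> (A *v z) - \<mu> * (z \<bullet> z)) * t^2 \<le> 0" for t
    proof -
      have "x + t *\<^sub>R z \<in> S" using S xS that by (simp add: subspace_add subspace_scale)
      from bound[OF this] have "(x + t *\<^sub>R z) \<bullet> (A *v (x + t *\<^sub>R z)) \<le> \<mu> * ((x + t *\<^sub>R z) \<bullet> (x + t *\<^sub>R z))" .
      moreover have "x \<bullet> x = 1" using nx by (simp add: norm_eq_1)
      moreover have "x \<bullet> (A *v z) = z \<bullet> (A *v x)" using sym_inner[OF sym, of z x] by (simp add: inner_commute)
      ultimately show ?thesis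
        by (simp add: matrix_vector_right_distrib matrix_vector_mult_scaleR inner_add_left inner_add_right
            algebra_simps power2_eq_square \<mu>_def inner_commute[of z x])
    qed
    then have "2 * (z \<bullet> (A *v x) - \<mu> * (z \<bullet> x)) = 0" by (rule quad_zero)
    then show ?thesis by (simp add: inner_diff_right)
  qed
  have "A *v x - \<mu> *\<^sub>R x \<in> S" using inv xS S by (simp add: subspace_diff subspace_scale)
  from orth[OF this] have "A *v x = \<mu> *\<^sub>R x" by simp
  then show ?thesis using xS nx by blast
qed



lemma eigbasis_sub:
  fixes A :: "real^'n^'n"
  assumes sym: "transpose A = A"
  shows "subspace S \<Longrightarrow> (\<forall>x\<in>S. A *v x \<in> S) \<Longrightarrow> \<exists>B. B \<subseteq> S \<and> finite B \<and> pairwise orthogonal B \<and>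
     (\<forall>x\<in>B. norm x = 1 \<and> (\<exists>\<mu>. A *v x = \<mu> *\<^sub>R x)) \<and> card B = dim S"
proof (induction "dim S" arbitrary: S rule: less_induct)
  case less
  show ?case
  proof (cases "S = {0}")
    case True
    then show ?thesis by (intro exI[of _ "{}"]) auto
  next
    case False
    obtain x \<mu> where xS: "x \<in> S" and nx: "norm x = 1" and ev: "A *v x = \<mu> *\<^sub>R x"
      using exists_eigvec[OF sym less.prems False] by blast
    define S' where "S' = {y \<in> S. x \<bullet> y = 0}"
    have sub': "subspace S'" using less.prems(1) unfolding S'_def subspace_def
      by (auto simp: inner_add_right)
    have inv': "\<forall>y\<in>S'. A *v y \<in> S'"
    proof
      fix y assume y: "y \<in> S'"
      have "x \<bullet> (A *v y) = (A *v x) \<bullet> y" using sym_inner[OF sym] by simp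
      also have "\<dots> = 0" using y ev unfolding S'_def by simp
      finally show "A *v y \<in> S'" using y less.prems(2) unfolding S'_def by auto
    qed
    have xn: "x \<notin> span S'"
    proof
      assume "x \<in> span S'"
      then have "x \<in> S'" using sub' by (metis span_eq_iff)
      then have "x \<bullet> x = 0" unfolding S'_def by simp
      then show False using nx by simp
    qed
    have spaneq: "span (insert x S') = S"
    proof
      show "span (insert x S') \<subseteq> S"
        using less.prems(1) xS unfolding S'_def by (intro span_minimal) auto
      show "S \<subseteq> span (insert x S')"
      proof
        fix y assume y: "y \<in> S"
        have "y - (x \<bullet> y) *\<^sub>R x \<in> S'" unfolding S'_def
          using y xS less.prems(1) nx by (auto simp: subspace_diff subspace_scale inner_diff_right
              dot_square_norm)
        then have "y - (x \<bullet> y) *\<^sub>R x \<in> span (insert x S')" by (simp add: span_base)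
        moreover have "(x \<bullet> y) *\<^sub>R x \<in> span (insert x S')" by (simp add: span_base span_scale)
        ultimately have "y - (x \<bullet> y) *\<^sub>R x + (x \<bullet> y) *\<^sub>R x \<in> span (insert x S')"
          by (rule span_add)
        then show "y \<in> span (insert x S')" by simp
      qed
    qed
    have dimS: "dim S = dim S' + 1"
      using spaneq xn by (metis dim_insert dim_span)
    then have "dim S' < dim S" by simp
    from less.hyps[OF this sub' inv'] obtain B' where B': "B' \<subseteq> S'" "finite B'" "pairwise orthogonal B'"
      "\<forall>x\<in>B'. norm x = 1 \<and> (\<exists>\<mu>. A *v x = \<mu> *\<^sub>R x)" "card B' = dim S'" by blast
    have xB': "x \<notin> B'" using B'(1) xn span_base by blast
    show ?thesis
    proof (intro exI[of _ "insert x B'"] conjI)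
      show "insert x B' \<subseteq> S" using B'(1) xS unfolding S'_def by auto
      show "finite (insert x B')" using B' by simp
      show "pairwise orthogonal (insert x B')"
        using B'(1,3) unfolding pairwise_insert S'_def
        by (auto simp: orthogonal_def inner_commute)
      show "\<forall>y\<in>insert x B'. norm y = 1 \<and> (\<exists>\<mu>. A *v y = \<mu> *\<^sub>R y)" using B'(4) nx ev by auto
      show "card (insert x B') = dim S" using B'(2,5) xB' dimS by simp
    qed
  qed
qed

lemma spectral_sym:
  fixes A :: "real^'n^'n"
  assumes sym: "transpose A = A"
  shows "\<exists>Q (d::'n \<Rightarrow> real). transpose Q ** Q = mat 1 \<and> Q ** transpose Q = mat 1 \<and>
           A ** Q = Q ** (\<chi> i j. if i = j then d i else 0)"
proof -
  obtain B where B: "finite B" "pairwise orthogonal B"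
      "\<forall>x\<in>B. norm x = 1 \<and> (\<exists>\<mu>. A *v x = \<mu> *\<^sub>R x)" "card B = dim (UNIV :: (real^'n) set)"
    using eigbasis_sub[OF sym, of UNIV] by auto
  then have "card B = CARD('n)" by simp
  then obtain b where b: "bij_betw b (UNIV::'n set) B"
    using bij_betw_iff_card[of "UNIV::'n set" B] B(1) by auto
  have binj: "b k = b l \<Longrightarrow> k = l" for k l using b by (auto simp: bij_betw_def inj_on_def)
  have bB: "b k \<in> B" for k using b by (auto simp: bij_betw_def)
  have "\<forall>k. \<exists>m. A *v b k = m *\<^sub>R b k" using B(3) bB by blast
  then have "\<exists>\<mu>. \<forall>k. A *v b k = \<mu> k *\<^sub>R b k" by (rule choice)
  then obtain \<mu> where \<mu>: "\<And>k. A *v b k = \<mu> k *\<^sub>R b k" by blast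
  have bb: "b k \<bullet> b l = (if k = l then 1 else 0)" for k l
  proof (cases "k = l")
    case True then show ?thesis using B(3) bB by (simp add: norm_eq_1)
  next
    case False then have "b k \<noteq> b l" using binj by blast
    then show ?thesis using B(2) bB False unfolding pairwise_def orthogonal_def by auto
  qed
  define Q where "Q = (\<chi> i k. b k $ i)"
  have 1: "transpose Q ** Q = mat 1"
  proof -
    have "(transpose Q ** Q) $ k $ l = mat 1 $ k $ l" for k l
      using bb[of k l] by (simp add: Q_def matrix_matrix_mult_def transpose_def mat_def inner_vec_def)
    then show ?thesis by (simp add: vec_eq_iff)
  qed
  have 2: "Q ** transpose Q = mat 1" using 1 matrix_left_right_inverse by blast
  have 3: "A ** Q = Q ** (\<chi> i j. if i = j then \<mu> i else 0)"
  proof -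
    have "(A ** Q) $ i $ l = (Q ** (\<chi> i j. if i = j then \<mu> i else 0)) $ i $ l" for i l
    proof -
      have "(A ** Q) $ i $ l = (A *v b l) $ i"
        by (simp add: Q_def matrix_matrix_mult_def matrix_vector_mult_def)
      also have "\<dots> = \<mu> l * b l $ i" using \<mu> by simp
      also have "\<dots> = (Q ** (\<chi> i j. if i = j then \<mu> i else 0)) $ i $ l"
        by (simp add: Q_def matrix_matrix_mult_def if_distrib cong: if_cong)
      finally show ?thesis .
    qed
    then show ?thesis by (simp add: vec_eq_iff)
  qed
  show ?thesis using 1 2 3 by blast
qed



lemma inner_mat: "(A::real^'m^'k) \<bullet> B = (\<Sum>i\<in>UNIV. \<Sum>j\<in>UNIV. A$i$j * B$i$j)"
  by (simp add: inner_vec_def)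

lemma frob_sq_eq: "frob_sq A = norm A ^ 2"
  unfolding frob_sq_def power2_norm_eq_inner inner_mat by (simp add: power2_eq_square)

lemma PO_add: "P_Omega \<Omega> (A + B) = P_Omega \<Omega> A + P_Omega \<Omega> B"
  by (simp add: P_Omega_def vec_eq_iff)
lemma PO_diff: "P_Omega \<Omega> (A - B) = P_Omega \<Omega> A - P_Omega \<Omega> B"
  by (simp add: P_Omega_def vec_eq_iff)
lemma PO_scale: "P_Omega \<Omega> (c *\<^sub>R A) = c *\<^sub>R P_Omega \<Omega> A"
  by (simp add: P_Omega_def vec_eq_iff)
lemma PO_idem: "P_Omega \<Omega> (P_Omega \<Omega> A) = P_Omega \<Omega> A"
  by (simp add: P_Omega_def vec_eq_iff)
lemma PO_inner: "P_Omega \<Omega> A \<bullet> B = A \<bullet> P_Omega \<Omega> B"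
  by (auto simp: P_Omega_def inner_mat intro!: sum.cong)
lemma PO_inner2: "P_Omega \<Omega> A \<bullet> B = P_Omega \<Omega> A \<bullet> P_Omega \<Omega> B"
  by (metis PO_idem PO_inner)

lemma sum_UNIV_pairs: "(\<Sum>i\<in>UNIV. \<Sum>j\<in>UNIV. f (i,j)) = (\<Sum>p\<in>UNIV. f p)"
  for f :: "'a::finite \<times> 'b::finite \<Rightarrow> real"
  by (subst sum.cartesian_product) simp

lemma mm_radd: "((A::real^'m^'k) + B) ** C = A ** C + B ** C"
  by (simp add: matrix_matrix_mult_def vec_eq_iff sum.distrib algebra_simps)
lemma mm_rdiff: "((A::real^'m^'k) - B) ** C = A ** C - B ** C"
  by (simp add: matrix_matrix_mult_def vec_eq_iff sum_subtractf algebra_simps)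
lemma mm_ladd: "(A::real^'m^'k) ** (B + C) = A ** B + A ** C"
  by (simp add: matrix_matrix_mult_def vec_eq_iff sum.distrib algebra_simps)
lemma mm_ldiff: "(A::real^'m^'k) ** (B - C) = A ** B - A ** C"
  by (simp add: matrix_matrix_mult_def vec_eq_iff sum_subtractf algebra_simps)
lemma mm_lneg: "(- A::real^'m^'k) ** B = - (A ** B)"
  by (simp add: matrix_matrix_mult_def vec_eq_iff sum_negf)
lemma mm_rneg: "(A::real^'m^'k) ** (- B) = - (A ** B)"
  by (simp add: matrix_matrix_mult_def vec_eq_iff sum_negf)
lemma mm_scl: "(c *\<^sub>R (A::real^'m^'k)) ** B = c *\<^sub>R (A ** B)"
  by (simp add: matrix_matrix_mult_def vec_eq_iff sum_distrib_left algebra_simps)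
lemma mm_scr: "(A::real^'m^'k) ** (c *\<^sub>R B) = c *\<^sub>R (A ** B)"
  by (simp add: matrix_matrix_mult_def vec_eq_iff sum_distrib_left algebra_simps)
lemma tr_add: "transpose ((A::real^'m^'k) + B) = transpose A + transpose B"
  by (simp add: transpose_def vec_eq_iff)
lemma tr_diff: "transpose ((A::real^'m^'k) - B) = transpose A - transpose B"
  by (simp add: transpose_def vec_eq_iff)
lemma tr_neg: "transpose (- (A::real^'m^'k)) = - transpose A"
  by (simp add: transpose_def vec_eq_iff)
lemma tr_scl: "transpose (c *\<^sub>R (A::real^'m^'k)) = c *\<^sub>R transpose A"
  by (simp add: transpose_def vec_eq_iff)
lemmas mm_simps = mm_radd mm_rdiff mm_ladd mm_ldiff mm_lneg mm_rneg mm_scl mm_scr tr_add tr_diff tr_neg tr_scl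
  matrix_transpose_mul

lemma sum_Omega_sq: "(\<Sum>(i,j)\<in>\<Omega>. (F $ i $ j)^2) = norm (P_Omega \<Omega> (F::real^'m^'k)) ^ 2"
proof -
  have "norm (P_Omega \<Omega> F) ^ 2 = (\<Sum>i\<in>UNIV. \<Sum>j\<in>UNIV. (if (i,j) \<in> \<Omega> then (F$i$j)^2 else 0))"
    by (simp only: power2_norm_eq_inner) (auto simp: inner_mat P_Omega_def power2_eq_square intro!: sum.cong)
  also have "\<dots> = (\<Sum>p\<in>UNIV. if p \<in> \<Omega> then (F $ fst p $ snd p)^2 else 0)"
    using sum_UNIV_pairs[of "\<lambda>p. if p \<in> \<Omega> then (F $ fst p $ snd p)^2 else 0"] by (simp only: fst_conv snd_conv)
  also have "\<dots> = (\<Sum>p\<in>\<Omega>. (F $ fst p $ snd p)^2)"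
    by (simp add: sum.inter_restrict[symmetric])
  finally show ?thesis by (simp add: case_prod_beta)
qed

lemma mm_inner1: "((A::real^'m^'k) ** B) \<bullet> C = A \<bullet> (C ** transpose B)"
  by (simp add: inner_mat matrix_matrix_mult_def transpose_def sum_distrib_left sum_distrib_right
      mult_ac) (subst sum.swap, rule refl)

lemma transpose_inner: "transpose (A::real^'m^'k) \<bullet> transpose B = A \<bullet> B"
  by (simp add: inner_mat transpose_def) (rule sum.swap)

lemma mm_inner2: "((A::real^'m^'k) ** transpose B) \<bullet> C = B \<bullet> (transpose C ** A)"
proof -
  have "(A ** transpose B) \<bullet> C = (B ** transpose A) \<bullet> transpose C"
    by (metis transpose_inner matrix_transpose_mul transpose_transpose)
  also have "\<dots> = B \<bullet> (transpose C ** A)" by (simp add: mm_inner1)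
  finally show ?thesis .
qed

lemma norm_sq_expand: "norm (a + t *\<^sub>R b) ^ 2 = norm a ^ 2 + t * (2 * (a \<bullet> b)) + t^2 * norm b ^ 2"
  for a b :: "'a::real_inner"
  by (simp only: power2_norm_eq_inner) (simp add: inner_add_left inner_add_right inner_commute algebra_simps power2_eq_square)

lemma poly_deriv: "((\<lambda>t::real. c0 + t * c1 + t^2 * c2) has_real_derivative c1) (at 0)"
  by (auto intro!: derivative_eq_intros)

lemma crit_dir:
  fixes X Y :: "real^'r^'n" and D :: "(real^'r^'n) \<times> (real^'r^'n)"
  assumes crit: "(h_obj \<Omega> M lam has_derivative (\<lambda>_. 0)) (at (X, Y))"
  shows "((\<lambda>t. h_obj \<Omega> M lam ((X, Y) + t *\<^sub>R D)) has_real_derivative 0) (at 0)"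
proof -
  have f: "((\<lambda>t::real. (X, Y) + t *\<^sub>R D) has_derivative (\<lambda>t. t *\<^sub>R D)) (at 0)"
    by (auto intro!: derivative_eq_intros)
  have "((h_obj \<Omega> M lam \<circ> (\<lambda>t::real. (X, Y) + t *\<^sub>R D)) has_derivative ((\<lambda>_. 0) \<circ> (\<lambda>t. t *\<^sub>R D))) (at 0)"
    by (rule diff_chain_at[OF f]) (simp add: crit)
  moreover have "(*) (0::real) = (\<lambda>_. 0)" by auto
  ultimately show ?thesis by (simp add: has_field_derivative_def o_def)
qed

lemma crit_eqs:
  fixes X Y :: "real^'r^'n" and M :: "real^'n^'n"
  assumes crit: "(h_obj \<Omega> M lam has_derivative (\<lambda>_. 0)) (at (X, Y))"
  shows "P_Omega \<Omega> (X ** transpose Y - M) ** Y = - lam *\<^sub>R X"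
    "transpose (P_Omega \<Omega> (X ** transpose Y - M)) ** X = - lam *\<^sub>R Y"
proof -
  define G where "G = P_Omega \<Omega> (X ** transpose Y - M)"
  have hform: "h_obj \<Omega> M lam (A, B) = (1/2) * norm (P_Omega \<Omega> (A ** transpose B - M))^2 + (lam/2) * norm A ^2 + (lam/2) * norm B ^2"
    for A B :: "real^'r^'n"
    using sum_Omega_sq[where \<Omega>=\<Omega> and F="A ** transpose B - M"]
    by (simp add: h_obj_def Let_def frob_sq_eq)
  {
    fix D :: "real^'r^'n"
    define K where "K = P_Omega \<Omega> (D ** transpose Y)"
    have "(X, Y) + t *\<^sub>R (D, 0) = (X + t *\<^sub>R D, Y)" for t by simp
    moreover have "P_Omega \<Omega> ((X + t *\<^sub>R D) ** transpose Y - M) = G + t *\<^sub>R K" for t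
      by (simp add: G_def K_def mm_simps PO_add PO_diff PO_scale algebra_simps)
    ultimately have "(\<lambda>t. h_obj \<Omega> M lam ((X, Y) + t *\<^sub>R (D, 0))) =
        (\<lambda>t. ((1/2) * norm G ^2 + (lam/2) * norm X ^2 + (lam/2) * norm Y ^2) + t * (G \<bullet> K + lam * (X \<bullet> D))
           + t^2 * ((1/2) * norm K ^2 + (lam/2) * norm D ^2))"
      by (simp add: hform norm_sq_expand algebra_simps fun_eq_iff)
    then have "((\<lambda>t. h_obj \<Omega> M lam ((X, Y) + t *\<^sub>R (D, 0))) has_real_derivative (G \<bullet> K + lam * (X \<bullet> D))) (at 0)"
      using poly_deriv by simp
    from DERIV_unique[OF this crit_dir[OF crit]] have "G \<bullet> K + lam * (X \<bullet> D) = 0" .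
    moreover have "G \<bullet> K = (G ** Y) \<bullet> D"
    proof -
      have "G \<bullet> K = G \<bullet> (D ** transpose Y)"
        by (simp add: G_def K_def PO_inner2[of \<Omega> "X ** transpose Y - M" "D ** transpose Y"])
      also have "\<dots> = (G ** Y) \<bullet> D" by (metis inner_commute mm_inner1 transpose_transpose)
      finally show ?thesis .
    qed
    ultimately have "(G ** Y + lam *\<^sub>R X) \<bullet> D = 0" by (simp add: inner_add_left)
  }
  from this[of "G ** Y + lam *\<^sub>R X"] have "G ** Y + lam *\<^sub>R X = 0" by (simp only: inner_eq_zero_iff)
  then show "P_Omega \<Omega> (X ** transpose Y - M) ** Y = - lam *\<^sub>R X"
    unfolding G_def[symmetric] by (metis eq_neg_iff_add_eq_0 scaleR_minus_left)
  {
    fix D :: "real^'r^'n"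
    define K where "K = P_Omega \<Omega> (X ** transpose D)"
    have "(X, Y) + t *\<^sub>R (0, D) = (X, Y + t *\<^sub>R D)" for t by simp
    moreover have "P_Omega \<Omega> (X ** transpose (Y + t *\<^sub>R D) - M) = G + t *\<^sub>R K" for t
      by (simp add: G_def K_def mm_simps PO_add PO_diff PO_scale algebra_simps)
    ultimately have "(\<lambda>t. h_obj \<Omega> M lam ((X, Y) + t *\<^sub>R (0, D))) =
        (\<lambda>t. ((1/2) * norm G ^2 + (lam/2) * norm X ^2 + (lam/2) * norm Y ^2) + t * (G \<bullet> K + lam * (Y \<bullet> D))
           + t^2 * ((1/2) * norm K ^2 + (lam/2) * norm D ^2))"
      by (simp add: hform norm_sq_expand algebra_simps fun_eq_iff)
    then have "((\<lambda>t. h_obj \<Omega> M lam ((X, Y) + t *\<^sub>R (0, D))) has_real_derivative (G \<bullet> K + lam * (Y \<bullet> D))) (at 0)"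
      using poly_deriv by simp
    from DERIV_unique[OF this crit_dir[OF crit]] have "G \<bullet> K + lam * (Y \<bullet> D) = 0" .
    moreover have "G \<bullet> K = (transpose G ** X) \<bullet> D"
    proof -
      have "G \<bullet> K = G \<bullet> (X ** transpose D)"
        by (simp add: G_def K_def PO_inner2[of \<Omega> "X ** transpose Y - M" "X ** transpose D"])
      also have "\<dots> = (transpose G ** X) \<bullet> D" by (metis inner_commute mm_inner2)
      finally show ?thesis .
    qed
    ultimately have "(transpose G ** X + lam *\<^sub>R Y) \<bullet> D = 0" by (simp add: inner_add_left)
  }
  from this[of "transpose G ** X + lam *\<^sub>R Y"] have "transpose G ** X + lam *\<^sub>R Y = 0" by (simp only: inner_eq_zero_iff)
  then show "transpose (P_Omega \<Omega> (X ** transpose Y - M)) ** X = - lam *\<^sub>R Y"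
    unfolding G_def[symmetric] by (metis eq_neg_iff_add_eq_0 scaleR_minus_left)
qed



definition dg :: "('r::finite \<Rightarrow> real) \<Rightarrow> real^'r^'r" where
  "dg a = (\<chi> i j. if i = j then a i else 0)"

lemma sum_ifL: "(\<Sum>k\<in>UNIV. (if i = k then c else 0) * f k) = c * f i" for f :: "'a::finite \<Rightarrow> real"
proof -
  have "(\<Sum>k\<in>UNIV. (if i = k then c else 0) * f k) = (\<Sum>k\<in>UNIV. if i = k then c * f i else 0)"
    by (rule sum.cong) auto
  also have "\<dots> = c * f i" by simp
  finally show ?thesis .
qed

lemma dg_mult: "dg a ** dg b = dg (\<lambda>i. a i * b i)"
  by (simp add: dg_def matrix_matrix_mult_def vec_eq_iff sum_ifL)
lemma dg_one: "dg (\<lambda>_. 1) = mat 1"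
  by (simp add: dg_def mat_def vec_eq_iff)
lemma dg_tr: "transpose (dg a) = dg a"
  by (simp add: dg_def transpose_def vec_eq_iff)
lemma dg_axis: "dg a *v axis k 1 = a k *\<^sub>R axis k 1"
proof -
  have "(dg a *v axis k 1) $ i = (a k *\<^sub>R axis k 1) $ i" for i
  proof -
    have "(dg a *v axis k 1) $ i = (\<Sum>j\<in>UNIV. (if i = j then a i else 0) * axis k 1 $ j)"
      by (simp add: dg_def matrix_vector_mult_def)
    also have "\<dots> = a i * axis k 1 $ i" by (rule sum_ifL)
    finally show ?thesis by (simp add: axis_def)
  qed
  then show ?thesis by (simp add: vec_eq_iff)
qed

lemma tr_mm_entry: "(transpose A ** B) $ k $ l = column k (A::real^'m^'n) \<bullet> column l B"
  by (simp add: matrix_matrix_mult_def transpose_def column_def inner_vec_def)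

lemma inner_tr: "x \<bullet> (transpose (M::real^'m^'n) *v y) = (M *v x) \<bullet> y"
  by (metis dot_lmul_matrix inner_commute transpose_matrix_vector)

lemma svd_construct:
  fixes X Y :: "real^'r^'n" and G :: "real^'n^'n"
  assumes rX: "rank X = CARD('r)" and GY: "G ** Y = - lam *\<^sub>R X" and GX: "transpose G ** X = - lam *\<^sub>R Y"
    and lam: "lam > 0"
  shows "\<exists>U V (\<sigma>::'r\<Rightarrow>real). transpose U ** U = mat 1 \<and> transpose V ** V = mat 1 \<and> (\<forall>k. \<sigma> k > 0) \<and>
     X ** transpose Y = U ** dg \<sigma> ** transpose V \<and> G ** V = - lam *\<^sub>R U \<and> transpose G ** U = - lam *\<^sub>R V"
proof -
  have e1: "transpose X ** (G ** Y) = - lam *\<^sub>R (transpose X ** X)" using GY by (simp add: mm_scr mm_rneg)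
  have e2: "transpose X ** (G ** Y) = transpose (transpose G ** X) ** Y"
    by (simp add: matrix_transpose_mul matrix_mul_assoc)
  have e3: "transpose (transpose G ** X) ** Y = - lam *\<^sub>R (transpose Y ** Y)"
    using GX by (simp add: tr_scl mm_scl tr_neg mm_lneg)
  from e1 e2 e3 have "- lam *\<^sub>R (transpose X ** X) = - lam *\<^sub>R (transpose Y ** Y)" by metis
  then have bal: "transpose X ** X = transpose Y ** Y" using lam by (metis scaleR_cancel_left neg_equal_0_iff_equal less_irrefl)
  define A where "A = transpose X ** X"
  have symA: "transpose A = A" by (simp add: A_def matrix_transpose_mul)
  obtain Q :: "real^'r^'r" and d where Q1: "transpose Q ** Q = mat 1" and Q2: "Q ** transpose Q = mat 1"
    and AQ: "A ** Q = Q ** (\<chi> i j. if i = j then d i else 0)"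
    using spectral_sym[OF symA] by blast
  have AQ': "A ** Q = Q ** dg d" using AQ by (simp add: dg_def)
  have injX: "inj ((*v) X)" using rX full_rank_injective by blast
  have dpos: "d k > 0" for k
  proof -
    define q where "q = Q *v axis k 1"
    have qq: "q \<bullet> q = 1"
      using tr_mm_entry[of Q Q k k] Q1 by (simp add: q_def matrix_vector_mult_basis mat_def)
    have "A *v q = (A ** Q) *v axis k 1" by (simp add: q_def matrix_vector_mul_assoc)
    also have "\<dots> = Q *v (dg d *v axis k 1)" by (simp add: AQ' matrix_vector_mul_assoc)
    also have "\<dots> = d k *\<^sub>R q" by (simp add: dg_axis q_def matrix_vector_mult_scaleR)
    finally have "A *v q = d k *\<^sub>R q" .
    then have "q \<bullet> (A *v q) = d k" using qq by simp
    moreover have "q \<bullet> (A *v q) = (X *v q) \<bullet> (X *v q)"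
    proof -
      have "q \<bullet> (A *v q) = q \<bullet> (transpose X *v (X *v q))" by (simp add: A_def matrix_vector_mul_assoc)
      also have "\<dots> = (X *v q) \<bullet> (X *v q)" by (rule inner_tr)
      finally show ?thesis .
    qed
    moreover have "X *v q \<noteq> 0"
    proof
      assume "X *v q = 0"
      then have "X *v q = X *v 0" by simp
      then have "q = 0" by (rule injD[OF injX])
      then show False using qq by simp
    qed
    moreover have "(X *v q) \<bullet> (X *v q) > 0" using \<open>X *v q \<noteq> 0\<close> by simp
    ultimately show ?thesis by linarith
  qed
  define h where "h = (\<lambda>k. 1 / sqrt (d k))"
  have hdh: "dg h ** dg d ** dg h = mat 1"
  proof -
    have "h k * d k * h k = 1" for k
    proof -
      have "sqrt (d k) * sqrt (d k) = d k" using dpos[of k] by simp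
      moreover have "sqrt (d k) > 0" using dpos[of k] by simp
      ultimately show ?thesis unfolding h_def by (simp add: field_simps)
    qed
    then show ?thesis by (simp add: dg_mult dg_one)
  qed
  define U where "U = X ** Q ** dg h"
  define V where "V = Y ** Q ** dg h"
  have QAQ: "transpose Q ** A ** Q = dg d"
  proof -
    have "transpose Q ** A ** Q = transpose Q ** (A ** Q)" by (simp add: matrix_mul_assoc)
    also have "\<dots> = (transpose Q ** Q) ** dg d" by (simp add: AQ' matrix_mul_assoc)
    finally show ?thesis using Q1 by simp
  qed
  have QAQ': "transpose Q ** (transpose Y ** Y) ** Q = dg d" using QAQ bal A_def by simp
  have "transpose U ** U = dg h ** (transpose Q ** A ** Q) ** dg h"
    by (simp add: U_def A_def matrix_transpose_mul dg_tr matrix_mul_assoc)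
  then have UU: "transpose U ** U = mat 1" using QAQ hdh by simp
  have "transpose V ** V = dg h ** (transpose Q ** (transpose Y ** Y) ** Q) ** dg h"
    by (simp add: V_def matrix_transpose_mul dg_tr matrix_mul_assoc)
  then have VV: "transpose V ** V = mat 1" using QAQ' hdh by simp
  have "U ** dg d ** transpose V = X ** Q ** (dg h ** dg d ** dg h) ** transpose Q ** transpose Y"
    by (simp add: U_def V_def matrix_transpose_mul dg_tr matrix_mul_assoc)
  also have "\<dots> = X ** transpose Y" using hdh Q2 by (simp add: matrix_mul_assoc[symmetric])
  finally have Z: "X ** transpose Y = U ** dg d ** transpose V" ..
  have GV: "G ** V = - lam *\<^sub>R U"
    unfolding V_def U_def by (simp add: matrix_mul_assoc GY mm_scl mm_lneg)
  have GU: "transpose G ** U = - lam *\<^sub>R V"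
    unfolding V_def U_def by (simp add: matrix_mul_assoc GX mm_scl mm_lneg)
  show ?thesis
    by (rule exI[of _ U], rule exI[of _ V], rule exI[of _ d]) (intro conjI UU VV allI dpos Z GV GU)
qed



lemma mv_row: "((A::real^'m^'n) *v x) $ i = (A $ i) \<bullet> x"
  by (simp add: matrix_vector_mult_def inner_vec_def mult.commute)

lemma norm_sq_vec: "norm (v::real^'n) ^ 2 = (\<Sum>i\<in>UNIV. (v$i)^2)"
  unfolding power2_norm_eq_inner by (simp add: inner_vec_def power2_eq_square)

lemma norm_sq_mat: "norm (A::real^'m^'n) ^ 2 = (\<Sum>i\<in>UNIV. norm (A$i)^2)"
  by (simp add: power2_norm_eq_inner inner_vec_def)

lemma frob_mv: "norm ((A::real^'m^'n) *v x) \<le> norm A * norm x"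
proof -
  have "norm (A *v x) ^ 2 = (\<Sum>i\<in>UNIV. ((A $ i) \<bullet> x)^2)" by (simp add: norm_sq_vec mv_row)
  also have "\<dots> \<le> (\<Sum>i\<in>UNIV. (norm (A $ i) * norm x)^2)"
  proof (rule sum_mono)
    fix i
    have "\<bar>(A $ i) \<bullet> x\<bar> \<le> norm (A $ i) * norm x" by (rule Cauchy_Schwarz_ineq2)
    then show "((A $ i) \<bullet> x)^2 \<le> (norm (A $ i) * norm x)^2"
      by (metis abs_ge_zero power2_abs power_mono)
  qed
  also have "\<dots> = (norm A * norm x)^2"
    by (simp add: norm_sq_mat power_mult_distrib sum_distrib_right)
  finally show ?thesis
    by (meson norm_ge_zero mult_nonneg_nonneg power2_le_imp_le)
qed

lemma spec_le: "(\<And>s. norm (B *v s) \<le> c * norm s) \<Longrightarrow> spec_norm (B::real^'m^'n) \<le> c"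
  unfolding spec_norm_def by (rule onorm_le)

lemma spec_bound: "norm ((B::real^'m^'n) *v s) \<le> spec_norm B * norm s"
  unfolding spec_norm_def by (rule onorm) simp

lemma entry_le: "\<bar>(B::real^'m^'n) $ i $ j\<bar> \<le> spec_norm B"
proof -
  have "B $ i $ j = (B *v axis j 1) $ i" by (simp add: matrix_vector_mult_basis column_def)
  then have "\<bar>B $ i $ j\<bar> \<le> norm (B *v axis j 1)" by (simp add: component_le_norm_cart)
  also have "\<dots> \<le> spec_norm B * norm (axis j (1::real))" by (rule spec_bound)
  finally show ?thesis by simp
qed

lemma trace_inner: "trace (transpose A ** B) = (A::real^'m^'n) \<bullet> B"
  by (simp add: trace_def matrix_matrix_mult_def transpose_def inner_vec_def) (rule sum.swap)

lemma nuc_set: "{trace (transpose A ** B) | B :: real^'m^'n. spec_norm B \<le> 1} = {A \<bullet> B | B. spec_norm B \<le> 1}"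
  by (simp add: trace_inner)

lemma nuc_bdd: "bdd_above {(A::real^'m^'n) \<bullet> B | B. spec_norm B \<le> 1}"
proof (rule bdd_aboveI)
  fix y assume "y \<in> {A \<bullet> B | B. spec_norm B \<le> 1}"
  then obtain B where y: "y = A \<bullet> B" and B: "spec_norm B \<le> 1" by blast
  have "A \<bullet> B = (\<Sum>i\<in>UNIV. \<Sum>j\<in>UNIV. A$i$j * B$i$j)" by (simp add: inner_vec_def)
  also have "\<dots> \<le> (\<Sum>i\<in>UNIV. \<Sum>j\<in>UNIV. \<bar>A$i$j\<bar>)"
  proof (intro sum_mono)
    fix i j
    have "\<bar>B$i$j\<bar> \<le> 1" using entry_le[of B i j] B by linarith
    then have "\<bar>A$i$j * B$i$j\<bar> \<le> \<bar>A$i$j\<bar>"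
      by (simp add: abs_mult mult_left_le)
    then show "A$i$j * B$i$j \<le> \<bar>A$i$j\<bar>" by linarith
  qed
  finally show "y \<le> (\<Sum>i\<in>UNIV. \<Sum>j\<in>UNIV. \<bar>A$i$j\<bar>)" using y by simp
qed

lemma spec_zero: "spec_norm (0::real^'m^'n) \<le> 1"
  by (rule spec_le) simp

lemma nuc_ge: "spec_norm B \<le> 1 \<Longrightarrow> (A::real^'m^'n) \<bullet> B \<le> nuc_norm A"
  unfolding nuc_norm_def nuc_set
  by (rule cSup_upper) (use nuc_bdd in auto)

lemma nuc_le: "(\<And>B. spec_norm B \<le> 1 \<Longrightarrow> (A::real^'m^'n) \<bullet> B \<le> c) \<Longrightarrow> nuc_norm A \<le> c"
  unfolding nuc_norm_def nuc_set
  by (rule cSup_least) (use spec_zero in auto)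

lemma mm_inner3: "((A::real^'m^'k) ** B) \<bullet> C = B \<bullet> (transpose A ** C)"
proof -
  have "(A ** B) \<bullet> C = (transpose B ** transpose A) \<bullet> transpose C"
    by (metis transpose_inner matrix_transpose_mul)
  also have "\<dots> = transpose B \<bullet> (transpose C ** A)" by (simp add: mm_inner1)
  also have "\<dots> = B \<bullet> (transpose A ** C)"
    by (metis transpose_inner matrix_transpose_mul transpose_transpose)
  finally show ?thesis .
qed



declare transpose_matrix_vector [simp del]

lemma dg_mv: "(dg a *v c) $ k = a k * c $ k"
proof -
  have "(dg a *v c) $ k = (\<Sum>j\<in>UNIV. (if k = j then a k else 0) * c $ j)"
    by (simp add: dg_def matrix_vector_mult_def)
  also have "\<dots> = a k * c $ k" by (rule sum_ifL)
  finally show ?thesis .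
qed

lemma mv_neg: "(- (A::real^'m^'n)) *v c = - (A *v c)"
  by (simp add: matrix_vector_mult_def vec_eq_iff sum_negf)

lemma orth_norm: "transpose U ** U = mat 1 \<Longrightarrow> norm ((U::real^'r^'n) *v w) = norm w"
proof -
  assume UU: "transpose U ** U = mat 1"
  have "(U *v w) \<bullet> (U *v w) = w \<bullet> (transpose U *v (U *v w))" by (rule inner_tr[symmetric])
  also have "\<dots> = w \<bullet> w" by (simp add: matrix_vector_mul_assoc UU)
  finally show ?thesis by (simp add: norm_eq_sqrt_inner)
qed

lemma rank_arg:
  fixes U V :: "real^'r^'n" and G Mstar Q :: "real^'n^'n" and \<sigma> :: "'r \<Rightarrow> real"
  assumes VV: "transpose V ** V = mat 1" and UU: "transpose U ** U = mat 1" and sig: "\<forall>k. \<sigma> k > 0"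
    and GV: "G ** V = - lam *\<^sub>R U" and GU: "transpose G ** U = - lam *\<^sub>R V"
    and lam: "lam > 0" and p: "p > 0"
    and Qdef: "p *\<^sub>R Mstar = p *\<^sub>R (U ** dg \<sigma> ** transpose V) - G - Q"
    and qlam: "spec_norm Q < lam"
    and rk: "rank Mstar = CARD('r)"
    and x: "transpose V *v x = 0"
  shows "norm (G *v x) \<le> spec_norm Q * norm x"
proof (rule ccontr)
  define q where "q = spec_norm Q"
  have q0: "q \<ge> 0" unfolding q_def spec_norm_def by (rule onorm_pos_le) simp
  assume "\<not> norm (G *v x) \<le> spec_norm Q * norm x"
  then have gx: "norm (G *v x) > q * norm x" unfolding q_def by simp
  define L where "L = (\<lambda>z::(real^'r) \<times> real. V *v fst z + snd z *\<^sub>R x)"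
  have linL: "linear L" unfolding L_def
    by (rule linearI) (auto simp: matrix_vector_right_distrib matrix_vector_mult_scaleR algebra_simps)
  have key: "Mstar *v L z \<noteq> 0" if z: "z \<noteq> 0" for z
  proof -
    obtain c \<alpha> where z': "z = (c, \<alpha>)" by (cases z)
    define s where "s = L z"
    have s: "s = V *v c + \<alpha> *\<^sub>R x" by (simp add: s_def L_def z')
    have Vs: "transpose V *v s = c"
      by (simp add: s matrix_vector_right_distrib matrix_vector_mult_scaleR matrix_vector_mul_assoc VV x)
    define w where "w = p *\<^sub>R (dg \<sigma> *v c) + lam *\<^sub>R c"
    have Zs: "(U ** dg \<sigma> ** transpose V) *v s = U *v (dg \<sigma> *v c)"
      by (simp add: matrix_vector_mul_assoc[symmetric] Vs)
    have Gs: "G *v s = - lam *\<^sub>R (U *v c) + \<alpha> *\<^sub>R (G *v x)"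
      by (simp add: s matrix_vector_right_distrib matrix_vector_mult_scaleR matrix_vector_mul_assoc GV
          mv_neg scaleR_matrix_vector_assoc[symmetric])
    have PZG: "(p *\<^sub>R (U ** dg \<sigma> ** transpose V) - G) *v s = U *v w - \<alpha> *\<^sub>R (G *v x)"
    proof -
      have "(p *\<^sub>R (U ** dg \<sigma> ** transpose V) - G) *v s = p *\<^sub>R ((U ** dg \<sigma> ** transpose V) *v s) - G *v s"
        by (simp add: matrix_vector_mult_diff_rdistrib scaleR_matrix_vector_assoc)
      also have "\<dots> = p *\<^sub>R (U *v (dg \<sigma> *v c)) + lam *\<^sub>R (U *v c) - \<alpha> *\<^sub>R (G *v x)"
        by (simp add: Zs Gs)
      also have "\<dots> = U *v w - \<alpha> *\<^sub>R (G *v x)"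
        by (simp add: w_def matrix_vector_right_distrib matrix_vector_mult_scaleR)
      finally show ?thesis .
    qed
    have UtG: "transpose U ** G = - lam *\<^sub>R transpose V"
      by (metis GU matrix_transpose_mul transpose_transpose tr_scl)
    have cross1: "(U *v w) \<bullet> (G *v x) = 0"
    proof -
      have "(U *v w) \<bullet> (G *v x) = w \<bullet> (transpose U *v (G *v x))" by (rule inner_tr[symmetric])
      also have "\<dots> = 0" by (simp add: matrix_vector_mul_assoc UtG mv_neg scaleR_matrix_vector_assoc[symmetric] x)
      finally show ?thesis .
    qed
    have cross2: "(V *v c) \<bullet> x = 0"
      by (metis inner_tr x inner_zero_right)
    have nw: "norm (U *v w) = norm w" by (rule orth_norm[OF UU])
    have nVc: "norm (V *v c) = norm c" by (rule orth_norm[OF VV])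
    have wc: "norm w ^ 2 \<ge> lam^2 * norm c ^ 2"
    proof -
      have "norm w ^ 2 = (\<Sum>k\<in>UNIV. ((p * \<sigma> k + lam) * c $ k)^2)"
        by (simp add: norm_sq_vec w_def dg_mv algebra_simps)
      also have "\<dots> \<ge> (\<Sum>k\<in>UNIV. lam^2 * (c $ k)^2)"
      proof (rule sum_mono)
        fix k
        have "p * \<sigma> k + lam \<ge> lam" using p sig[rule_format, of k] by simp
        then have "(p * \<sigma> k + lam)^2 \<ge> lam^2" using lam by (simp add: power_mono)
        then show "lam^2 * (c $ k)^2 \<le> ((p * \<sigma> k + lam) * c $ k)^2"
          by (simp add: power_mult_distrib mult_right_mono)
      qed
      finally show ?thesis by (simp add: norm_sq_vec sum_distrib_left)
    qed
    have n1: "norm ((p *\<^sub>R (U ** dg \<sigma> ** transpose V) - G) *v s) ^ 2 = norm w ^ 2 + \<alpha>^2 * norm (G *v x) ^ 2"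
      unfolding PZG power2_norm_eq_inner
      by (simp add: inner_diff_left inner_diff_right cross1 inner_commute[of "G *v x" "U *v w"]
          nw[unfolded norm_eq_sqrt_inner] power2_eq_square)
        (simp add: nw[symmetric] power2_norm_eq_inner[symmetric] power2_eq_square)
    have n2: "norm s ^ 2 = norm c ^ 2 + \<alpha>^2 * norm x ^ 2"
      unfolding s power2_norm_eq_inner
      by (simp add: inner_add_left inner_add_right cross2 inner_commute[of x "V *v c"] power2_eq_square)
        (simp add: nVc[symmetric] power2_norm_eq_inner[symmetric] power2_eq_square)
    have gx2: "norm (G *v x) ^ 2 > (q * norm x) ^ 2" using gx q0
      by (simp add: power_strict_mono)
    have gx3: "norm (G *v x) ^ 2 \<ge> q^2 * norm x ^ 2" using gx2 by (simp add: power_mult_distrib)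
    have lq: "lam^2 > q^2" using qlam q0 unfolding q_def by (simp add: power_strict_mono)
    have strict: "norm ((p *\<^sub>R (U ** dg \<sigma> ** transpose V) - G) *v s) ^ 2 > q^2 * norm s ^ 2"
    proof (cases "c = 0")
      case False
      then have "norm c ^ 2 > 0" by simp
      then have "lam^2 * norm c ^2 > q^2 * norm c ^ 2" using lq by simp
      moreover have "\<alpha>^2 * norm (G *v x) ^ 2 \<ge> \<alpha>^2 * (q^2 * norm x ^ 2)"
        using gx3 by (simp add: mult_left_mono)
      ultimately show ?thesis using n1 n2 wc by (simp add: algebra_simps)
    next
      case True
      then have "\<alpha> \<noteq> 0" using z z' by (auto simp: zero_prod_def)
      then have "\<alpha>^2 > 0" by simp
      then have "\<alpha>^2 * norm (G *v x) ^ 2 > \<alpha>^2 * (q^2 * norm x ^ 2)"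
        using gx2 by (simp add: power_mult_distrib)
      moreover have "lam^2 * norm c ^2 \<ge> q^2 * norm c ^ 2" using lq by (simp add: True)
      ultimately show ?thesis using n1 n2 wc by (simp add: algebra_simps)
    qed
    have big: "norm ((p *\<^sub>R (U ** dg \<sigma> ** transpose V) - G) *v s) > q * norm s"
    proof -
      have "(q * norm s)^2 < norm ((p *\<^sub>R (U ** dg \<sigma> ** transpose V) - G) *v s) ^ 2"
        using strict by (simp add: power_mult_distrib)
      then show ?thesis using q0 by (meson norm_ge_zero power_less_imp_less_base)
    qed
    have Qs: "norm (Q *v s) \<le> q * norm s" unfolding q_def by (rule spec_bound)
    have "p *\<^sub>R (Mstar *v s) = (p *\<^sub>R (U ** dg \<sigma> ** transpose V) - G) *v s - Q *v s"
      by (simp add: scaleR_matrix_vector_assoc Qdef matrix_vector_mult_diff_rdistrib)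
    then have "norm (p *\<^sub>R (Mstar *v s)) \<ge> norm ((p *\<^sub>R (U ** dg \<sigma> ** transpose V) - G) *v s) - norm (Q *v s)"
      by (metis norm_triangle_ineq2)
    then have "norm (p *\<^sub>R (Mstar *v s)) > 0" using big Qs by linarith
    then show ?thesis by (auto simp: s_def)
  qed
  define f where "f = (\<lambda>z. Mstar *v L z)"
  have linf: "linear f" unfolding f_def
    using linL by (simp add: linear_compose[of L "(*v) Mstar", unfolded o_def] matrix_vector_mul_linear)
  have injf: "inj f"
  proof (rule injI)
    fix a b assume "f a = f b"
    then have "f (a - b) = 0" using linf by (simp add: linear_diff)
    then show "a = b" using key unfolding f_def by (metis eq_iff_diff_eq_0)
  qed
  have ind: "independent (f ` Basis)"
    using linear_independent_injective_image[OF linf independent_Basis] injf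
    by (auto intro: inj_on_subset)
  have "card (f ` Basis) = card (Basis :: ((real^'r) \<times> real) set)"
    using injf by (simp add: card_image inj_on_subset)
  also have "\<dots> = CARD('r) + 1" by simp
  finally have c1: "card (f ` Basis) = CARD('r) + 1" .
  have "f ` Basis \<subseteq> range (\<lambda>y. Mstar *v y)" unfolding f_def by auto
  then have "card (f ` Basis) \<le> dim (range (\<lambda>y. Mstar *v y))"
    using ind by (rule independent_card_le_dim)
  also have "\<dots> = CARD('r)" using rk by (simp add: rank_dim_range)
  finally show False using c1 by simp
qed



declare transpose_matrix_vector [simp del]

lemma cert_bound:
  fixes U V :: "real^'r^'n" and G D :: "real^'n^'n"
  assumes UU: "transpose U ** U = mat 1" and VV: "transpose V ** V = mat 1"
    and GV: "G ** V = - lam *\<^sub>R U" and GU: "transpose G ** U = - lam *\<^sub>R V" and lam: "lam > 0"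
    and nb: "\<And>x. transpose V *v x = 0 \<Longrightarrow> norm (G *v x) \<le> (lam/4) * norm x"
    and DU: "transpose U ** D = 0" and DV: "D ** V = 0" and nD: "norm D \<le> 1"
  shows "spec_norm ((- (1/lam)) *\<^sub>R G + (3/4) *\<^sub>R D) \<le> 1"
proof -
  define B where "B = (- (1/lam)) *\<^sub>R G + (3/4) *\<^sub>R D"
  have "norm (B *v s) \<le> 1 * norm s" for s
  proof -
    define c where "c = transpose V *v s"
    define s2 where "s2 = s - V *v c"
    have VVc: "transpose V *v (V *v c) = c" by (simp add: matrix_vector_mul_assoc VV)
    have Vs2: "transpose V *v s2 = 0"
      by (simp add: s2_def matrix_vector_mult_diff_distrib VVc) (simp add: c_def)
    have BV: "B ** V = U" using lam by (simp add: B_def mm_radd mm_rdiff mm_scl GV DV)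
    have Bs1: "B *v (V *v c) = U *v c" by (simp add: matrix_vector_mul_assoc BV)
    define r where "r = B *v s2"
    have UtG: "transpose U ** G = - lam *\<^sub>R transpose V"
      by (metis GU matrix_transpose_mul transpose_transpose tr_scl)
    have UB: "transpose U ** B = transpose V" using lam by (simp add: B_def mm_ladd mm_ldiff mm_scr UtG DU)
    have Ur: "transpose U *v r = 0" by (simp add: r_def matrix_vector_mul_assoc UB Vs2)
    have Bs: "B *v s = U *v c + r"
    proof -
      have "s = V *v c + s2" by (simp add: s2_def)
      then have "B *v s = B *v (V *v c) + B *v s2" by (simp add: matrix_vector_right_distrib)
      then show ?thesis by (simp add: Bs1 r_def)
    qed
    have cr: "(U *v c) \<bullet> r = 0"
    proof -
      have "(U *v c) \<bullet> r = c \<bullet> (transpose U *v r)" by (rule inner_tr[symmetric])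
      then show ?thesis by (simp add: Ur)
    qed
    have cs: "(V *v c) \<bullet> s2 = 0"
    proof -
      have "(V *v c) \<bullet> s2 = c \<bullet> (transpose V *v s2)" by (rule inner_tr[symmetric])
      then show ?thesis by (simp add: Vs2)
    qed
    have nr: "norm r \<le> norm s2"
    proof -
      have r_eq: "r = (- (1/lam)) *\<^sub>R (G *v s2) + (3/4) *\<^sub>R (D *v s2)"
        unfolding r_def B_def matrix_vector_mult_add_rdistrib scaleR_matrix_vector_assoc[symmetric] ..
      have "norm r \<le> norm ((- (1/lam)) *\<^sub>R (G *v s2)) + norm ((3/4) *\<^sub>R (D *v s2))"
        unfolding r_eq by (rule norm_triangle_ineq)
      also have "\<dots> = (1/lam) * norm (G *v s2) + (3/4) * norm (D *v s2)" using lam by simp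
      also have "\<dots> \<le> (1/lam) * ((lam/4) * norm s2) + (3/4) * (1 * norm s2)"
      proof (intro add_mono mult_left_mono)
        show "norm (G *v s2) \<le> lam / 4 * norm s2" by (rule nb[OF Vs2])
        have "norm (D *v s2) \<le> norm D * norm s2" by (rule frob_mv)
        also have "\<dots> \<le> 1 * norm s2" by (rule mult_right_mono[OF nD norm_ge_zero])
        finally show "norm (D *v s2) \<le> 1 * norm s2" .
      qed (use lam in auto)
      also have "\<dots> = norm s2" using lam by simp
      finally show ?thesis .
    qed
    have "norm (B *v s) ^ 2 = norm (U *v c) ^ 2 + norm r ^ 2"
      unfolding Bs power2_norm_eq_inner
      by (simp add: inner_add_left inner_add_right cr inner_commute[of r "U *v c"])
    also have "\<dots> = norm c ^ 2 + norm r ^ 2" by (simp add: orth_norm[OF UU])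
    also have "\<dots> \<le> norm c ^ 2 + norm s2 ^ 2" using nr by (simp add: power_mono)
    also have "\<dots> = norm (V *v c) ^ 2 + norm s2 ^ 2" by (simp add: orth_norm[OF VV])
    also have "\<dots> = norm s ^ 2"
    proof -
      have "s = V *v c + s2" by (simp add: s2_def)
      then have "norm s ^ 2 = (V *v c + s2) \<bullet> (V *v c + s2)" by (simp add: power2_norm_eq_inner)
      also have "\<dots> = norm (V *v c) ^ 2 + norm s2 ^ 2"
        by (simp add: inner_add_left inner_add_right cs inner_commute[of s2 "V *v c"] power2_norm_eq_inner)
      finally show ?thesis by simp
    qed
    finally have "norm (B *v s) ^ 2 \<le> norm s ^ 2" .
    then have "norm (B *v s) \<le> norm s" by (rule power2_le_imp_le) simp
    then show ?thesis by simp
  qed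
  then show ?thesis unfolding B_def[symmetric] by (rule spec_le)
qed

lemma norm_tr: "norm (transpose (A::real^'m^'n)) = norm A"
  by (simp add: norm_eq_sqrt_inner transpose_inner)

lemma row_trmm: "(transpose Y ** transpose B) $ k = B *v (transpose Y $ k)"
  for Y :: "real^'r^'n" and B :: "real^'n^'n"
  by (simp add: vec_eq_iff matrix_matrix_mult_def matrix_vector_mult_def transpose_def mult.commute)

lemma norm_BY: "spec_norm B \<le> 1 \<Longrightarrow> norm ((B::real^'n^'n) ** (Y::real^'r^'n)) \<le> norm Y"
proof -
  assume B: "spec_norm B \<le> 1"
  have "norm (B ** Y) ^ 2 = norm (transpose Y ** transpose B) ^ 2"
    by (metis norm_tr matrix_transpose_mul)
  also have "\<dots> = (\<Sum>k\<in>UNIV. norm (B *v (transpose Y $ k)) ^ 2)" by (simp add: norm_sq_mat row_trmm)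
  also have "\<dots> \<le> (\<Sum>k\<in>UNIV. norm (transpose Y $ k) ^ 2)"
  proof (rule sum_mono)
    fix k
    have "norm (B *v (transpose Y $ k)) \<le> spec_norm B * norm (transpose Y $ k)" by (rule spec_bound)
    also have "\<dots> \<le> 1 * norm (transpose Y $ k)" using mult_right_mono[OF B norm_ge_zero] by simp
    finally show "norm (B *v (transpose Y $ k)) ^ 2 \<le> norm (transpose Y $ k) ^ 2"
      by (simp add: power_mono)
  qed
  also have "\<dots> = norm Y ^ 2" by (simp add: norm_sq_mat[symmetric] norm_tr)
  finally have "norm (B ** Y) ^ 2 \<le> norm Y ^ 2" .
  then show ?thesis by (rule power2_le_imp_le) simp
qed



declare transpose_matrix_vector [simp del]

lemma decomp:
  fixes U V :: "real^'r^'n" and H :: "real^'n^'n"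
  shows "H = U ** (transpose U ** H) + (mat 1 - U ** transpose U) ** H ** V ** transpose V
           + (mat 1 - U ** transpose U) ** H ** (mat 1 - V ** transpose V)"
proof -
  have 1: "(mat 1 - U ** transpose U) ** H ** (mat 1 - V ** transpose V) =
      (mat 1 - U ** transpose U) ** H - (mat 1 - U ** transpose U) ** H ** V ** transpose V"
    by (simp add: mm_ldiff matrix_mul_assoc)
  have 2: "(mat 1 - U ** transpose U) ** H = H - U ** (transpose U ** H)"
    by (simp add: mm_rdiff matrix_mul_assoc)
  show ?thesis unfolding 1 unfolding 2 by (simp add: algebra_simps)
qed

theorem lemma1:
  fixes Mstar E :: "real^'n^'n"
    and X Y :: "real^'r^'n"
    and \<Omega> :: "('n \<times> 'n) set"
    and p lam :: real
  assumes rank_Mstar: "rank Mstar = CARD('r)"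
    and p_pos: "0 < p" and p_le: "p \<le> 1"
    and lam_pos: "0 < lam"
    and crit: "(h_obj \<Omega> (Mstar + E) lam has_derivative (\<lambda>_. 0)) (at (X, Y))"
    and rank_X: "rank X = CARD('r)" and rank_Y: "rank Y = CARD('r)"
    and inj: "\<forall>H \<in> tangent_space TYPE('r) (X ** transpose Y). P_Omega \<Omega> H = 0 \<longrightarrow> H = 0"
    and a: "spec_norm (P_Omega \<Omega> E) < lam / 8"
    and b: "spec_norm (P_Omega \<Omega> (X ** transpose Y - Mstar) - p *\<^sub>R (X ** transpose Y - Mstar)) < lam / 8"
  shows "\<forall>Z. Z \<noteq> X ** transpose Y \<longrightarrow>
           g_obj \<Omega> (Mstar + E) lam (X ** transpose Y) < g_obj \<Omega> (Mstar + E) lam Z"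
proof -
  define Z0 where "Z0 = X ** transpose Y"
  define M where "M = Mstar + E"
  define G where "G = P_Omega \<Omega> (Z0 - M)"
  have GY: "G ** Y = - lam *\<^sub>R X" and GX: "transpose G ** X = - lam *\<^sub>R Y"
    using crit_eqs[OF crit] unfolding G_def Z0_def M_def by auto
  obtain U V :: "real^'r^'n" and \<sigma> where UU: "transpose U ** U = mat 1" and VV: "transpose V ** V = mat 1"
    and sig: "\<forall>k. \<sigma> k > 0" and Z0U: "X ** transpose Y = U ** dg \<sigma> ** transpose V"
    and GV: "G ** V = - lam *\<^sub>R U" and GU: "transpose G ** U = - lam *\<^sub>R V"
    using svd_construct[OF rank_X GY GX lam_pos] by blast
  define Q where "Q = p *\<^sub>R Z0 - G - p *\<^sub>R Mstar"
  define K where "K = P_Omega \<Omega> (Z0 - Mstar) - p *\<^sub>R (Z0 - Mstar)"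
  have Qeq: "Q = P_Omega \<Omega> E - K"
    by (simp add: Q_def K_def G_def M_def PO_diff PO_add PO_scale algebra_simps)
  have Qn: "spec_norm Q \<le> spec_norm (P_Omega \<Omega> E) + spec_norm K"
  proof (rule spec_le)
    fix s
    have "norm (Q *v s) \<le> norm (P_Omega \<Omega> E *v s) + norm (K *v s)"
      unfolding Qeq matrix_vector_mult_diff_rdistrib by (rule norm_triangle_ineq4)
    also have "\<dots> \<le> spec_norm (P_Omega \<Omega> E) * norm s + spec_norm K * norm s"
      by (intro add_mono spec_bound)
    finally show "norm (Q *v s) \<le> (spec_norm (P_Omega \<Omega> E) + spec_norm K) * norm s"
      by (simp add: algebra_simps)
  qed
  have qlam4: "spec_norm Q < lam / 4" using Qn a b unfolding K_def Z0_def by linarith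
  have Qdef: "p *\<^sub>R Mstar = p *\<^sub>R (U ** dg \<sigma> ** transpose V) - G - Q"
    by (simp add: Q_def Z0U[symmetric] Z0_def)
  have nb: "norm (G *v x) \<le> (lam/4) * norm x" if x: "transpose V *v x = 0" for x
  proof -
    have "norm (G *v x) \<le> spec_norm Q * norm x"
      by (rule rank_arg[OF VV UU sig GV GU lam_pos p_pos Qdef _ rank_Mstar x]) (use qlam4 lam_pos in simp)
    also have "\<dots> \<le> (lam/4) * norm x" using qlam4 by (intro mult_right_mono) simp_all
    finally show ?thesis .
  qed
  have ZG1: "Z0 \<bullet> G = - lam * (X \<bullet> X)"
  proof -
    have "Z0 \<bullet> G = X \<bullet> (G ** Y)" unfolding Z0_def by (metis mm_inner1 transpose_transpose)
    then show ?thesis by (simp add: GY)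
  qed
  have ZG2: "Z0 \<bullet> G = - lam * (Y \<bullet> Y)"
  proof -
    have "Z0 \<bullet> G = Y \<bullet> (transpose G ** X)" unfolding Z0_def by (rule mm_inner2)
    then show ?thesis by (simp add: GX)
  qed
  have XY: "norm X = norm Y" using ZG1 ZG2 lam_pos by (simp add: norm_eq_sqrt_inner)
  have nucZ0: "lam * nuc_norm Z0 \<le> - (Z0 \<bullet> G)"
  proof -
    have "nuc_norm Z0 \<le> X \<bullet> X"
    proof (rule nuc_le)
      fix B :: "real^'n^'n" assume B: "spec_norm B \<le> 1"
      have "Z0 \<bullet> B = X \<bullet> (B ** Y)" unfolding Z0_def by (metis mm_inner1 transpose_transpose)
      also have "\<dots> \<le> norm X * norm (B ** Y)" by (rule norm_cauchy_schwarz)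
      also have "\<dots> \<le> norm X * norm Y" by (rule mult_left_mono[OF norm_BY[OF B] norm_ge_zero])
      also have "\<dots> = X \<bullet> X" using XY by (simp add: dot_square_norm power2_eq_square)
      finally show "Z0 \<bullet> B \<le> X \<bullet> X" .
    qed
    then show ?thesis using ZG1 lam_pos by (simp add: mult_left_mono)
  qed
  have gform: "g_obj \<Omega> M lam W = 1/2 * norm (P_Omega \<Omega> (W - M)) ^ 2 + lam * nuc_norm W" for W
    using sum_Omega_sq[where \<Omega>=\<Omega> and F="W - M"] by (simp add: g_obj_def)
  have gZ0: "g_obj \<Omega> M lam Z0 \<le> 1/2 * norm G ^ 2 - Z0 \<bullet> G"
    using nucZ0 by (simp add: gform G_def)
  show ?thesis
  proof (intro allI impI)
    fix Z :: "real^'n^'n"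
    assume Zne: "Z \<noteq> X ** transpose Y"
    define H where "H = Z - Z0"
    have Hne: "H \<noteq> 0" using Zne unfolding H_def Z0_def by simp
    define Pu where "Pu = mat 1 - U ** transpose U"
    define Pv where "Pv = mat 1 - V ** transpose V"
    define P where "P = Pu ** H ** Pv"
    define D where "D = (1 / norm P) *\<^sub>R P"
    have UPu: "transpose U ** Pu = 0" unfolding Pu_def by (simp add: mm_ldiff matrix_mul_assoc UU)
    have PvV: "Pv ** V = 0" unfolding Pv_def
      by (simp add: mm_rdiff matrix_mul_assoc[symmetric] VV)
    have UP: "transpose U ** P = 0" unfolding P_def by (simp add: matrix_mul_assoc UPu)
    have PV: "P ** V = 0" unfolding P_def by (simp add: matrix_mul_assoc[symmetric] PvV)
    have DU: "transpose U ** D = 0" unfolding D_def by (simp add: mm_scr UP)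
    have DV: "D ** V = 0" unfolding D_def by (simp add: mm_scl PV)
    have nD: "norm D \<le> 1" unfolding D_def by (cases "P = 0") simp_all
    have cert: "spec_norm ((- (1/lam)) *\<^sub>R G + (3/4) *\<^sub>R D) \<le> 1"
      by (rule cert_bound[OF UU VV GV GU lam_pos nb DU DV nD])
    have nucZ: "Z \<bullet> ((- (1/lam)) *\<^sub>R G + (3/4) *\<^sub>R D) \<le> nuc_norm Z" by (rule nuc_ge[OF cert])
    have Z0D: "Z0 \<bullet> D = 0"
    proof -
      have "Z0 = U ** (dg \<sigma> ** transpose V)" by (simp add: Z0_def Z0U matrix_mul_assoc)
      then have "Z0 \<bullet> D = (dg \<sigma> ** transpose V) \<bullet> (transpose U ** D)" by (simp add: mm_inner3)
      then show ?thesis by (simp add: DU)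
    qed
    have HP: "H \<bullet> P = P \<bullet> P"
    proof -
      have dec: "H = U ** (transpose U ** H) + Pu ** H ** V ** transpose V + P"
        unfolding P_def Pu_def Pv_def by (rule decomp)
      have e1: "(U ** (transpose U ** H)) \<bullet> P = 0" by (simp add: mm_inner3 UP)
      have e2: "(Pu ** H ** V ** transpose V) \<bullet> P = 0" by (metis mm_inner1 transpose_transpose PV inner_zero_right)
      have "H \<bullet> P = (U ** (transpose U ** H)) \<bullet> P + (Pu ** H ** V ** transpose V) \<bullet> P + P \<bullet> P"
        by (subst dec) (simp add: inner_add_left)
      then show ?thesis using e1 e2 by simp
    qed
    have HD: "H \<bullet> D = norm P"
    proof (cases "P = 0")
      case True then show ?thesis by (simp add: D_def)
    next
      case False
      then have "norm P > 0" by simp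
      have "H \<bullet> D = (1 / norm P) * (P \<bullet> P)" by (simp add: D_def HP)
      also have "\<dots> = norm P" using \<open>norm P > 0\<close> by (simp add: dot_square_norm power2_eq_square)
      finally show ?thesis .
    qed
    have ZB: "Z \<bullet> ((- (1/lam)) *\<^sub>R G + (3/4) *\<^sub>R D) = - (1/lam) * (Z0 \<bullet> G) - (1/lam) * (H \<bullet> G) + (3/4) * norm P"
    proof -
      have "Z = Z0 + H" by (simp add: H_def)
      then show ?thesis by (simp add: inner_add_left inner_add_right Z0D HD algebra_simps)
    qed
    have lamnuc: "lam * nuc_norm Z \<ge> - (Z0 \<bullet> G) - H \<bullet> G + (3/4) * lam * norm P"
    proof -
      have "lam * (Z \<bullet> ((- (1/lam)) *\<^sub>R G + (3/4) *\<^sub>R D)) \<le> lam * nuc_norm Z"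
        using nucZ lam_pos by (simp add: mult_left_mono)
      moreover have "lam * (Z \<bullet> ((- (1/lam)) *\<^sub>R G + (3/4) *\<^sub>R D)) = - (Z0 \<bullet> G) - H \<bullet> G + (3/4) * lam * norm P"
        unfolding ZB using lam_pos by (simp add: algebra_simps)
      ultimately show ?thesis by simp
    qed
    have PZ: "P_Omega \<Omega> (Z - M) = G + P_Omega \<Omega> H"
    proof -
      have "Z - M = (Z0 - M) + H" by (simp add: H_def)
      then have "P_Omega \<Omega> (Z - M) = P_Omega \<Omega> ((Z0 - M) + H)" by (rule arg_cong)
      then show ?thesis unfolding G_def PO_add .
    qed
    have GH: "G \<bullet> P_Omega \<Omega> H = G \<bullet> H" unfolding G_def by (metis PO_inner2)
    have nsq: "norm (P_Omega \<Omega> (Z - M)) ^ 2 = norm G ^ 2 + 2 * (G \<bullet> H) + norm (P_Omega \<Omega> H) ^ 2"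
      unfolding PZ power2_norm_eq_inner
      by (simp add: inner_add_left inner_add_right GH inner_commute[of "P_Omega \<Omega> H" G])
    have gZ: "g_obj \<Omega> M lam Z \<ge> g_obj \<Omega> M lam Z0 + 1/2 * norm (P_Omega \<Omega> H) ^ 2 + (3/4) * lam * norm P"
    proof -
      have e: "g_obj \<Omega> M lam Z = 1/2 * (norm G ^ 2 + 2 * (G \<bullet> H) + norm (P_Omega \<Omega> H) ^ 2) + lam * nuc_norm Z"
        by (simp only: gform nsq)
      have l: "- (Z0 \<bullet> G) - G \<bullet> H + (3/4) * lam * norm P \<le> lam * nuc_norm Z"
        using lamnuc by (simp add: inner_commute[of H G])
      show ?thesis unfolding e using gZ0 l by (simp add: algebra_simps)
    qed
    have pos: "1/2 * norm (P_Omega \<Omega> H) ^ 2 + (3/4) * lam * norm P > 0"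
    proof (cases "P = 0")
      case False
      then have "norm P > 0" by simp
      then show ?thesis using lam_pos by (simp add: add_nonneg_pos)
    next
      case True
      have Heq: "H = U ** transpose (transpose H ** U) + (Pu ** H ** V) ** transpose V"
      proof -
        have dec: "H = U ** (transpose U ** H) + Pu ** H ** V ** transpose V + P"
          unfolding P_def Pu_def Pv_def by (rule decomp)
        then show ?thesis using True by (simp add: matrix_transpose_mul)
      qed
      have "H \<in> tangent_space TYPE('r) (X ** transpose Y)"
        unfolding tangent_space_def mem_Collect_eq
        apply (rule exI[of _ U], rule exI[of _ V], rule exI[of _ "dg \<sigma>"], rule exI[of _ "transpose H ** U"],
          rule exI[of _ "Pu ** H ** V"])
        using UU VV sig Z0U Heq by (simp add: dg_def)
      then have "P_Omega \<Omega> H \<noteq> 0" using inj Hne by blast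
      then have "norm (P_Omega \<Omega> H) > 0" by simp
      then show ?thesis using True by simp
    qed
    show "g_obj \<Omega> (Mstar + E) lam (X ** transpose Y) < g_obj \<Omega> (Mstar + E) lam Z"
      using gZ pos unfolding M_def[symmetric] Z0_def[symmetric] by linarith
  qed
qed


end
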